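(* Let $I:[0,1]^2\to[0,1]$ be a fuzzy implication function, let $U_1,U_2$ be disjunctive uninorms with neutral elements $e_1,e_2\in\,]0,1[$ respectively, and let $N_1,N_2$ be fuzzy negations such that $$I(x,y)=U_1(N_1(x),y)=U_2(N_2(x),y)\quad\text{for all }x,y\in[0,1].$$ Then: (i) if $U_1=U_2$, then $N_1=N_2$; (ii) if $N_1,N_2$ are continuous and $N_1=N_2$, then $U_1=U_2$; (iii) if $e_1=e_2$ and $N_1,N_2$ are continuous, then $U_1=U_2$ and $N_1=N_2$.
   Context: A fuzzy negation is a non-increasing map $N:[0,1]\to[0,1]$ with $N(0)=1$, $N(1)=0$. A uninorm is a map $U:[0,1]^2\to[0,1]$ that is commutative, associative, non-decreasing in each variable, and has a neutral element $e\in[0,1]$ ($U(x,e)=x$ for all $x$). A uninorm is disjunctive if $U(1,0)=1$. A fuzzy implication function is a map $I:[0,1]^2\to[0,1]$ that is non-increasing in the first variable, non-decreasing in the second, and satisfies $I(0,0)=I(1,1)=1$, $I(1,0)=0$. *)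

theory Defs
  imports Complex_Main
begin

text \<open>All operators are real functions considered only on the unit interval [0,1];
values outside [0,1] are irrelevant, and equalities of operators are equalities on [0,1].\<close>

definition fuzzy_negation :: "(real \<Rightarrow> real) \<Rightarrow> bool" where
  "fuzzy_negation N \<longleftrightarrow>
     (\<forall>x\<in>{0..1}. N x \<in> {0..1}) \<and>
     (\<forall>x\<in>{0..1}. \<forall>y\<in>{0..1}. x \<le> y \<longrightarrow> N y \<le> N x) \<and>
     N 0 = 1 \<and> N 1 = 0"

definition uninorm :: "(real \<Rightarrow> real \<Rightarrow> real) \<Rightarrow> real \<Rightarrow> bool" where
  "uninorm U e \<longleftrightarrow> e \<in> {0..1} \<and>
     (\<forall>x\<in>{0..1}. \<forall>y\<in>{0..1}. U x y \<in> {0..1}) \<and>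
     (\<forall>x\<in>{0..1}. \<forall>y\<in>{0..1}. U x y = U y x) \<and>
     (\<forall>x\<in>{0..1}. \<forall>y\<in>{0..1}. \<forall>z\<in>{0..1}. U x (U y z) = U (U x y) z) \<and>
     (\<forall>x\<in>{0..1}. \<forall>y\<in>{0..1}. \<forall>z\<in>{0..1}. x \<le> y \<longrightarrow> U x z \<le> U y z) \<and>
     (\<forall>x\<in>{0..1}. U x e = x)"

definition disjunctive_uninorm :: "(real \<Rightarrow> real \<Rightarrow> real) \<Rightarrow> real \<Rightarrow> bool" where
  "disjunctive_uninorm U e \<longleftrightarrow> uninorm U e \<and> U 1 0 = 1"

definition fuzzy_implication :: "(real \<Rightarrow> real \<Rightarrow> real) \<Rightarrow> bool" where
  "fuzzy_implication I \<longleftrightarrow>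
     (\<forall>x\<in>{0..1}. \<forall>y\<in>{0..1}. I x y \<in> {0..1}) \<and>
     (\<forall>x1\<in>{0..1}. \<forall>x2\<in>{0..1}. \<forall>y\<in>{0..1}. x1 \<le> x2 \<longrightarrow> I x2 y \<le> I x1 y) \<and>
     (\<forall>x\<in>{0..1}. \<forall>y1\<in>{0..1}. \<forall>y2\<in>{0..1}. y1 \<le> y2 \<longrightarrow> I x y1 \<le> I x y2) \<and>
     I 0 0 = 1 \<and> I 1 1 = 1 \<and> I 1 0 = 0"

end

theory Submission
  imports Defs
begin

lemma surjN:
  assumes "fuzzy_negation N" "continuous_on {0..1} N" "a \<in> {0..1::real}"
  shows "\<exists>x\<in>{0..1}. N x = a"
proof -
  have "N 1 \<le> a" "a \<le> N 0" using assms unfolding fuzzy_negation_def by auto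
  from IVT2'[OF this _ assms(2)] show ?thesis by auto
qed

theorem proposition1:
  fixes I U1 U2 :: "real \<Rightarrow> real \<Rightarrow> real" and N1 N2 :: "real \<Rightarrow> real" and e1 e2 :: real
  assumes I: "fuzzy_implication I"
    and U1: "disjunctive_uninorm U1 e1" and e1: "0 < e1" "e1 < 1"
    and U2: "disjunctive_uninorm U2 e2" and e2: "0 < e2" "e2 < 1"
    and N1: "fuzzy_negation N1" and N2: "fuzzy_negation N2"
    and rep: "\<forall>x\<in>{0..1}. \<forall>y\<in>{0..1}. I x y = U1 (N1 x) y \<and> I x y = U2 (N2 x) y"
  shows "((\<forall>x\<in>{0..1}. \<forall>y\<in>{0..1}. U1 x y = U2 x y) \<longrightarrow> (\<forall>x\<in>{0..1}. N1 x = N2 x))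
       \<and> (continuous_on {0..1} N1 \<and> continuous_on {0..1} N2 \<and> (\<forall>x\<in>{0..1}. N1 x = N2 x)
            \<longrightarrow> (\<forall>x\<in>{0..1}. \<forall>y\<in>{0..1}. U1 x y = U2 x y))
       \<and> (e1 = e2 \<and> continuous_on {0..1} N1 \<and> continuous_on {0..1} N2
            \<longrightarrow> (\<forall>x\<in>{0..1}. \<forall>y\<in>{0..1}. U1 x y = U2 x y) \<and> (\<forall>x\<in>{0..1}. N1 x = N2 x))"
proof -
  have n1: "\<And>x. x \<in> {0..1} \<Longrightarrow> N1 x \<in> {0..1}" using N1 unfolding fuzzy_negation_def by blast
  have n2: "\<And>x. x \<in> {0..1} \<Longrightarrow> N2 x \<in> {0..1}" using N2 unfolding fuzzy_negation_def by blast
  have ne1: "\<And>x. x \<in> {0..1} \<Longrightarrow> U1 x e1 = x" using U1 unfolding disjunctive_uninorm_def uninorm_def by blast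
  have ne2: "\<And>x. x \<in> {0..1} \<Longrightarrow> U2 x e2 = x" using U2 unfolding disjunctive_uninorm_def uninorm_def by blast
  have e1i: "e1 \<in> {0..1}" "e2 \<in> {0..1}" using e1 e2 by auto
  have P1: "(\<forall>x\<in>{0..1}. \<forall>y\<in>{0..1}. U1 x y = U2 x y) \<longrightarrow> (\<forall>x\<in>{0..1}. N1 x = N2 x)"
  proof (intro impI ballI)
    fix x :: real assume eq: "\<forall>x\<in>{0..1}. \<forall>y\<in>{0..1}. U1 x y = U2 x y" and x: "x \<in> {0..1}"
    have "N1 x = U1 (N1 x) e1" using ne1 n1 x by simp
    also have "\<dots> = U2 (N2 x) e1" using rep x e1i(1) by (metis (no_types))
    also have "\<dots> = U1 (N2 x) e1" using eq n2 x e1i by simp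
    also have "\<dots> = N2 x" using ne1 n2 x by simp
    finally show "N1 x = N2 x" .
  qed
  have P2: "continuous_on {0..1} N1 \<and> continuous_on {0..1} N2 \<and> (\<forall>x\<in>{0..1}. N1 x = N2 x)
            \<longrightarrow> (\<forall>x\<in>{0..1}. \<forall>y\<in>{0..1}. U1 x y = U2 x y)"
  proof (intro impI ballI)
    fix a y :: real assume h: "continuous_on {0..1} N1 \<and> continuous_on {0..1} N2 \<and> (\<forall>x\<in>{0..1}. N1 x = N2 x)"
      and a: "a \<in> {0..1}" and y: "y \<in> {0..1}"
    obtain x where x: "x \<in> {0..1}" "N1 x = a" using surjN[OF N1 _ a] h by blast
    have "U1 a y = U1 (N1 x) y" using x by simp
    also have "\<dots> = U2 (N2 x) y" using rep x y by (metis (no_types))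
    also have "\<dots> = U2 a y" using h x by simp
    finally show "U1 a y = U2 a y" .
  qed
  have P3: "e1 = e2 \<and> continuous_on {0..1} N1 \<and> continuous_on {0..1} N2
            \<longrightarrow> (\<forall>x\<in>{0..1}. \<forall>y\<in>{0..1}. U1 x y = U2 x y) \<and> (\<forall>x\<in>{0..1}. N1 x = N2 x)"
  proof (intro impI)
    assume h: "e1 = e2 \<and> continuous_on {0..1} N1 \<and> continuous_on {0..1} N2"
    have NN: "\<forall>x\<in>{0..1}. N1 x = N2 x"
    proof
      fix x :: real assume x: "x \<in> {0..1}"
      have "N1 x = U1 (N1 x) e1" using ne1 n1 x by simp
      also have "\<dots> = U2 (N2 x) e1" using rep x e1i(1) by (metis (no_types))
      also have "\<dots> = N2 x" using ne2 n2 x h by simp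
      finally show "N1 x = N2 x" .
    qed
    then show "(\<forall>x\<in>{0..1}. \<forall>y\<in>{0..1}. U1 x y = U2 x y) \<and> (\<forall>x\<in>{0..1}. N1 x = N2 x)"
      using P2 h by blast
  qed
  show ?thesis using P1 P2 P3 by blast
qed

end
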